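(* Let $m\geq 1$ and $n\geq 3$ be integers. For all vertices $i,j$ of the oriented Dutch windmill graph $D^m_n$, the number of walks in $D^m_n$ of length $2n-1$ from $i$ to $j$ is exactly $m$ times the number of walks of length $n-1$ from $i$ to $j$.
   Context: For integers $m\geq 1$, $n\geq 3$, the oriented Dutch windmill graph $D^m_n$ is the directed graph with vertex set $V=\{1,2,\ldots,m(n-1)+1\}$ whose directed edges $(a,b)$ are exactly: $(1,(k-1)(n-1)+2)$ for $k\in\{1,\ldots,m\}$; $((k-1)(n-1)+i,(k-1)(n-1)+i+1)$ for $k\in\{1,\ldots,m\}$ and $i\in\{2,\ldots,n-1\}$; and $((k-1)(n-1)+n,1)$ for $k\in\{1,\ldots,m\}$. A walk is a sequence of vertices $\langle v_1,\ldots,v_r\rangle$ in which each $(v_t,v_{t+1})$ is an edge; its length is $r-1$; walks are distinct when they are distinct sequences. *)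

theory Defs
  imports Main
begin

definition windmill_verts :: "nat \<Rightarrow> nat \<Rightarrow> nat set" where
  "windmill_verts m n = {1 .. m * (n - 1) + 1}"

definition windmill_edges :: "nat \<Rightarrow> nat \<Rightarrow> (nat \<times> nat) set" where
  "windmill_edges m n =
     {(1, (k - 1) * (n - 1) + 2) | k. k \<in> {1..m}}
   \<union> {((k - 1) * (n - 1) + i, (k - 1) * (n - 1) + i + 1) | k i. k \<in> {1..m} \<and> i \<in> {2..n-1}}
   \<union> {((k - 1) * (n - 1) + n, 1) | k. k \<in> {1..m}}"

definition is_walk :: "(nat \<times> nat) set \<Rightarrow> nat list \<Rightarrow> bool" where
  "is_walk E vs \<longleftrightarrow> vs \<noteq> [] \<and> (\<forall>t. Suc t < length vs \<longrightarrow> (vs ! t, vs ! Suc t) \<in> E)"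

definition walks :: "(nat \<times> nat) set \<Rightarrow> nat \<Rightarrow> nat \<Rightarrow> nat \<Rightarrow> nat list set" where
  "walks E l i j = {vs. is_walk E vs \<and> length vs = l + 1 \<and> hd vs = i \<and> last vs = j}"

end

theory Submission
  imports Defs
begin

lemma is_walk_Cons:
  "is_walk E (x # ys) \<longleftrightarrow> (ys = [] \<or> ((x, hd ys) \<in> E \<and> is_walk E ys))"
proof (cases ys)
  case Nil
  then show ?thesis by (simp add: is_walk_def)
next
  case (Cons y zs)
  have "(\<forall>t. Suc t < length (x # ys) \<longrightarrow> ((x # ys) ! t, (x # ys) ! Suc t) \<in> E)
     \<longleftrightarrow> ((x, y) \<in> E \<and> (\<forall>t. Suc t < length ys \<longrightarrow> (ys ! t, ys ! Suc t) \<in> E))"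
    (is "?A \<longleftrightarrow> ?B")
  proof
    assume A: ?A
    show ?B
    proof
      show "(x, y) \<in> E" using A[rule_format, of 0] Cons by simp
      show "\<forall>t. Suc t < length ys \<longrightarrow> (ys ! t, ys ! Suc t) \<in> E"
        using A Cons by (metis Suc_less_eq length_Cons nth_Cons_Suc)
    qed
  next
    assume B: ?B
    show ?A
    proof (intro allI impI)
      fix t assume t: "Suc t < length (x # ys)"
      show "((x # ys) ! t, (x # ys) ! Suc t) \<in> E"
      proof (cases t)
        case 0 then show ?thesis using B Cons by simp
      next
        case (Suc t') then show ?thesis using B t by simp
      qed
    qed
  qed
  then show ?thesis using Cons by (simp add: is_walk_def)
qed

lemma walks_finite:
  assumes "finite E"
  shows "finite (walks E L i j)"
proof -
  have "walks E L i j \<subseteq> {xs. set xs \<subseteq> insert i (snd ` E) \<and> length xs = L + 1}"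
  proof
    fix xs assume xs: "xs \<in> walks E L i j"
    have "set xs \<subseteq> insert i (snd ` E)"
    proof
      fix x assume "x \<in> set xs"
      then obtain t where t: "t < length xs" "xs ! t = x" by (metis in_set_conv_nth)
      show "x \<in> insert i (snd ` E)"
      proof (cases t)
        case 0 then show ?thesis using xs t by (auto simp: walks_def is_walk_def hd_conv_nth)
      next
        case (Suc t')
        then have "(xs ! t', xs ! t) \<in> E" using xs t by (auto simp: walks_def is_walk_def)
        then show ?thesis using t by force
      qed
    qed
    then show "xs \<in> {xs. set xs \<subseteq> insert i (snd ` E) \<and> length xs = L + 1}"
      using xs by (simp add: walks_def)
  qed
  moreover have "finite {xs. set xs \<subseteq> insert i (snd ` E) \<and> length xs = L + 1}"
    using assms by (intro finite_lists_length_eq) auto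
  ultimately show ?thesis by (rule finite_subset)
qed

lemma walks_Suc_eq:
  "walks E (Suc L) i j = (\<Union>v\<in>{v. (i, v) \<in> E}. (#) i ` walks E L v j)"
proof
  show "walks E (Suc L) i j \<subseteq> (\<Union>v\<in>{v. (i, v) \<in> E}. (#) i ` walks E L v j)"
  proof
    fix xs assume xs: "xs \<in> walks E (Suc L) i j"
    then obtain ys where ys: "xs = i # ys" unfolding walks_def by (cases xs) auto
    have ne: "ys \<noteq> []" using xs ys by (auto simp: walks_def)
    have w: "(i, hd ys) \<in> E \<and> is_walk E ys" using xs ys ne by (auto simp: walks_def is_walk_Cons)
    have "ys \<in> walks E L (hd ys) j" using xs ys ne w by (auto simp: walks_def)
    then show "xs \<in> (\<Union>v\<in>{v. (i, v) \<in> E}. (#) i ` walks E L v j)" using w ys by blast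
  qed
next
  show "(\<Union>v\<in>{v. (i, v) \<in> E}. (#) i ` walks E L v j) \<subseteq> walks E (Suc L) i j"
  proof
    fix xs assume "xs \<in> (\<Union>v\<in>{v. (i, v) \<in> E}. (#) i ` walks E L v j)"
    then obtain v ys where v: "(i, v) \<in> E" "ys \<in> walks E L v j" "xs = i # ys" by blast
    then have ne: "ys \<noteq> []" by (auto simp: walks_def is_walk_def)
    then show "xs \<in> walks E (Suc L) i j" using v by (auto simp: walks_def is_walk_Cons)
  qed
qed

lemma card_walks_Suc:
  assumes "finite E"
  shows "card (walks E (Suc L) i j) = (\<Sum>v\<in>{v. (i, v) \<in> E}. card (walks E L v j))"
proof -
  have fin: "finite {v. (i, v) \<in> E}"
  proof -
    have "{v. (i, v) \<in> E} \<subseteq> snd ` E" by force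
    then show ?thesis using assms finite_subset by blast
  qed
  have "card (walks E (Suc L) i j) = card (\<Union>v\<in>{v. (i, v) \<in> E}. (#) i ` walks E L v j)"
    by (simp add: walks_Suc_eq)
  also have "\<dots> = (\<Sum>v\<in>{v. (i, v) \<in> E}. card ((#) i ` walks E L v j))"
  proof (rule card_UN_disjoint[OF fin])
    show "\<forall>v\<in>{v. (i, v) \<in> E}. finite ((#) i ` walks E L v j)"
      using walks_finite[OF assms] by blast
    show "\<forall>v\<in>{v. (i, v) \<in> E}. \<forall>w\<in>{v. (i, v) \<in> E}. v \<noteq> w \<longrightarrow>
        (#) i ` walks E L v j \<inter> (#) i ` walks E L w j = {}"
      by (auto simp: walks_def is_walk_def)
  qed
  also have "\<dots> = (\<Sum>v\<in>{v. (i, v) \<in> E}. card (walks E L v j))"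
    by (simp add: card_image)
  finally show ?thesis .
qed

lemma modeq:
  assumes h: "(a::nat) * c + r = b * c + s" "r < c" "s < c"
  shows "r = s"
proof -
  have "(a * c + r) mod c = r" using h(2) by simp
  moreover have "(b * c + s) mod c = s" using h(3) by simp
  ultimately show ?thesis using h(1) by simp
qed

lemma contra_lemma:
  assumes "(K::nat) * c + p = K' * c + c + 1" "2 \<le> p" "p \<le> c"
  shows False
proof -
  have e: "K * c + (p - 2) = K' * c + (c - 1)" using assms by simp
  have "p - 2 = c - 1" by (rule modeq[OF e]) (use assms in auto)
  then show False using assms by simp
qed

context
  fixes m n c :: nat
  assumes nc: "n = Suc c" and c2: "c \<ge> 2"
begin

abbreviation "EE \<equiv> windmill_edges m n"
abbreviation "W L i j \<equiv> card (walks EE L i j)"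

lemma finE: "finite EE"
  unfolding windmill_edges_def
  by (intro finite_UnI finite_image_set finite_image_set2) auto

lemma e1:
  assumes "K < m" "2 \<le> p" "p \<le> c"
  shows "{w. (K * c + p, w) \<in> EE} = {K * c + p + 1}"
proof -
  have "(K * c + p, K * c + p + 1) \<in> EE"
  proof -
    have "((Suc K - 1) * (n - 1) + p, (Suc K - 1) * (n - 1) + p + 1) \<in> EE"
      unfolding windmill_edges_def using assms nc
      by (intro UnI1 UnI2 CollectI exI[of _ "Suc K"] exI[of _ p]) auto
    then show ?thesis using nc by simp
  qed
  moreover have "w = K * c + p + 1" if "(K * c + p, w) \<in> EE" for w
  proof -
    from that consider (a) "K * c + p = 1"
      | (b) k i where "K * c + p = (k - 1) * (n - 1) + i" "w = (k - 1) * (n - 1) + i + 1"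
      | (d) k where "K * c + p = (k - 1) * (n - 1) + n"
      unfolding windmill_edges_def atLeastAtMost_iff by blast
    then show ?thesis
    proof cases
      case a then show ?thesis using assms by simp
    next
      case b then show ?thesis by simp
    next
      case d
      then have "K * c + p = (k - 1) * c + c + 1" using nc by simp
      then show ?thesis using contra_lemma assms by blast
    qed
  qed
  ultimately show ?thesis by blast
qed

lemma e2:
  assumes "K < m"
  shows "{w. (K * c + c + 1, w) \<in> EE} = {1}"
proof -
  have "(K * c + c + 1, 1) \<in> EE"
  proof -
    have "((Suc K - 1) * (n - 1) + n, 1) \<in> EE"
      unfolding windmill_edges_def using assms nc by (intro UnI2 CollectI exI[of _ "Suc K"]) auto
    then show ?thesis using nc by simp
  qed
  moreover have "w = 1" if "(K * c + c + 1, w) \<in> EE" for w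
  proof -
    from that consider (a) "K * c + c + 1 = 1"
      | (b) k i where "K * c + c + 1 = (k - 1) * (n - 1) + i" "2 \<le> i" "i \<le> n - 1"
      | (d) "w = 1"
      unfolding windmill_edges_def atLeastAtMost_iff by blast
    then show ?thesis
    proof cases
      case a then show ?thesis using c2 by simp
    next
      case b
      then have "(k - 1) * c + i = K * c + c + 1" "2 \<le> i" "i \<le> c" using nc by auto
      then show ?thesis using contra_lemma by blast
    next
      case d then show ?thesis .
    qed
  qed
  ultimately show ?thesis by blast
qed

lemma e3:
  "{w. (1, w) \<in> EE} = (\<lambda>K. K * c + 2) ` {..<m}"
proof -
  have "(1, K * c + 2) \<in> EE" if "K < m" for K
  proof -
    have "(1, (Suc K - 1) * (n - 1) + 2) \<in> EE"
      unfolding windmill_edges_def using that nc by (intro UnI1 CollectI exI[of _ "Suc K"]) auto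
    then show ?thesis using nc by simp
  qed
  moreover have "w \<in> (\<lambda>K. K * c + 2) ` {..<m}" if "(1, w) \<in> EE" for w
  proof -
    from that consider (a) k where "w = (k - 1) * (n - 1) + 2" "1 \<le> k" "k \<le> m"
      | (b) k i where "1 = (k - 1) * (n - 1) + i" "2 \<le> i"
      | (d) k where "1 = (k - 1) * (n - 1) + n"
      unfolding windmill_edges_def atLeastAtMost_iff by blast
    then show ?thesis
    proof cases
      case a
      then have "w = (k - 1) * c + 2" "k - 1 < m" using nc by auto
      then show ?thesis by blast
    next
      case b then show ?thesis by simp
    next
      case d then show ?thesis using nc c2 by simp
    qed
  qed
  ultimately show ?thesis by blast
qed

lemma W_hub: "W (Suc L) 1 j = (\<Sum>K<m. W L (K * c + 2) j)"
proof -
  have inj: "inj_on (\<lambda>K. K * c + 2) {..<m}"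
    using c2 by (auto simp: inj_on_def)
  show ?thesis
    using card_walks_Suc[OF finE, of L 1 j] e3 sum.reindex[OF inj, of "\<lambda>v. W L v j"]
    by simp
qed

lemma W_cycle:
  assumes "K < m"
  shows "1 \<le> t \<Longrightarrow> t \<le> c \<Longrightarrow> W (L + t) (K * c + c + 2 - t) j = W L 1 j"
proof (induction t)
  case 0 then show ?case by simp
next
  case (Suc t)
  show ?case
  proof (cases "t = 0")
    case True
    then show ?thesis
      using card_walks_Suc[OF finE, of L "K * c + c + 1" j] e2[OF assms] by simp
  next
    case False
    define p where "p = c + 1 - t"
    have p: "2 \<le> p" "p \<le> c" using False Suc.prems by (auto simp: p_def)
    have v: "K * c + c + 2 - Suc t = K * c + p" using Suc.prems by (simp add: p_def)
    have v1: "K * c + p + 1 = K * c + c + 2 - t" using Suc.prems False by (simp add: p_def)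
    have "W (L + Suc t) (K * c + p) j = W (L + t) (K * c + p + 1) j"
      using card_walks_Suc[OF finE, of "L + t" "K * c + p" j] e1[OF assms p] by simp
    also have "\<dots> = W L 1 j" using Suc.IH Suc.prems False v1 by simp
    finally show ?thesis using v by simp
  qed
qed

lemma W_cycle_full:
  assumes "K < m"
  shows "W (L + c) (K * c + 2) j = W L 1 j"
  using W_cycle[OF assms, of c L j] c2 by simp

lemma W_hub_n: "W (L + n) 1 j = m * W L 1 j"
proof -
  have "W (L + n) 1 j = W (Suc (L + c)) 1 j" using nc by simp
  also have "\<dots> = (\<Sum>K<m. W (L + c) (K * c + 2) j)" by (rule W_hub)
  also have "\<dots> = (\<Sum>K<m. W L 1 j)" using W_cycle_full by simp
  finally show ?thesis by simp
qed

end

theorem proposition2p7: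
  fixes m n i j :: nat
  assumes "m \<ge> 1" and "n \<ge> 3"
    and "i \<in> windmill_verts m n" and "j \<in> windmill_verts m n"
  shows "card (walks (windmill_edges m n) (2 * n - 1) i j)
           = m * card (walks (windmill_edges m n) (n - 1) i j)"
proof -
  define c where "c = n - 1"
  have nc: "n = Suc c" and c2: "c \<ge> 2" using assms(2) by (auto simp: c_def)
  show ?thesis
  proof (cases "i = 1")
    case True
    have eq: "2 * n - 1 = c + n" using nc by simp
    have "card (walks (windmill_edges m n) (2 * n - 1) 1 j) = card (walks (windmill_edges m n) (c + n) 1 j)"
      by (simp only: eq)
    also have "\<dots> = m * card (walks (windmill_edges m n) c 1 j)" by (rule W_hub_n[OF nc c2])
    finally show ?thesis using True by (simp add: c_def)
  next
    case False
    then have i2: "i \<ge> 2" "i \<le> m * c + 1" using assms(3) by (auto simp: windmill_verts_def c_def)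
    define K where "K = (i - 2) div c"
    define r where "r = (i - 2) mod c"
    have r: "r < c" using c2 by (simp add: r_def)
    have ieq: "i = K * c + r + 2" using i2 by (simp add: K_def r_def)
    have "K * c < m * c" using ieq i2 r by linarith
    then have K: "K < m" by simp
    define t where "t = c - r"
    have t: "1 \<le> t" "t \<le> c" using r by (auto simp: t_def)
    have it: "i = K * c + c + 2 - t" using ieq r by (simp add: t_def)
    define L1 where "L1 = c - t"
    have a: "2 * n - 1 = (L1 + n) + t" using nc t by (simp add: L1_def)
    have b: "n - 1 = L1 + t" using nc t by (simp add: L1_def)
    have "card (walks (windmill_edges m n) (2 * n - 1) i j)
        = card (walks (windmill_edges m n) (L1 + n) 1 j)"
      using W_cycle[OF nc c2 K t, of "L1 + n" j] a it by simp
    also have "\<dots> = m * card (walks (windmill_edges m n) L1 1 j)"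
      by (rule W_hub_n[OF nc c2])
    also have "card (walks (windmill_edges m n) L1 1 j)
        = card (walks (windmill_edges m n) (n - 1) i j)"
      using W_cycle[OF nc c2 K t, of L1 j] b it by simp
    finally show ?thesis .
  qed
qed

end
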